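(* Let $x_1,\dots,x_n\in\mathbb{R}^p$, let $T\subset\{1,\dots,p\}$ with $|T|=s\geqslant1$, fix $c>1$ and let $\bar c=(c+1)/(c-1)$. Then for any integer $m>0$, $$\kappa_{\bar c}\geqslant\kappa(m)\Big(1-\mu(m)\,\bar c\sqrt{\frac sm}\Big).$$
   Context: $\|\delta\|_{2,n}=\sqrt{n^{-1}\sum_{i=1}^n(x_i'\delta)^2}$; for $A\subset\{1,\dots,p\}$, $\delta_A$ is $\delta$ with entries outside $A$ set to zero, and $T^c$ is the complement of $T$. Restricted eigenvalue: $\kappa_{\bar c}=\min\{\sqrt s\|\delta\|_{2,n}/\|\delta_T\|_1:\ \|\delta_{T^c}\|_1\leqslant\bar c\|\delta_T\|_1,\ \delta_T\neq0\}$. Sparse eigenvalues: $\kappa(m)^2=\min$ and $\phi(m)=\max$ of $\|\delta\|_{2,n}^2/\|\delta\|^2$ over $\delta\neq0$ with $\|\delta_{T^c}\|_0\leqslant m$ (number of nonzero entries outside $T$ at most $m$), and $\mu(m)=\sqrt{\phi(m)}/\kappa(m)$, so that $\kappa(m)\mu(m)=\sqrt{\phi(m)}$. *)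

theory Defs
  imports "HOL-Analysis.Analysis"
begin

text \<open>Design vectors x_1..x_n in R^p are represented as x :: nat => real^'p,
 with observations indexed 0..n-1; 'p is a finite index type playing the role of {1..p}.\<close>

definition norm2n :: "(nat \<Rightarrow> real^'p) \<Rightarrow> nat \<Rightarrow> real^'p \<Rightarrow> real" where
  "norm2n x n \<delta> = sqrt ((\<Sum>i<n. (x i \<bullet> \<delta>)^2) / real n)"

definition restr :: "real^'p \<Rightarrow> 'p set \<Rightarrow> real^'p" where
  "restr \<delta> A = (\<chi> j. if j \<in> A then \<delta> $ j else 0)"

definition l1norm :: "real^'p \<Rightarrow> real" where
  "l1norm \<delta> = (\<Sum>j\<in>UNIV. \<bar>\<delta> $ j\<bar>)"

definition l0_out :: "real^'p \<Rightarrow> 'p set \<Rightarrow> nat" where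
  "l0_out \<delta> T = card {j. j \<notin> T \<and> \<delta> $ j \<noteq> 0}"

text \<open>Restricted eigenvalue kappa_{cbar} (the minimum is taken as an infimum).\<close>
definition kappa_re :: "(nat \<Rightarrow> real^'p) \<Rightarrow> nat \<Rightarrow> 'p set \<Rightarrow> nat \<Rightarrow> real \<Rightarrow> real" where
  "kappa_re x n T s cbar = Inf {sqrt (real s) * norm2n x n \<delta> / l1norm (restr \<delta> T) | \<delta>.
      l1norm (restr \<delta> (- T)) \<le> cbar * l1norm (restr \<delta> T) \<and> restr \<delta> T \<noteq> 0}"

definition sparse_ratios :: "(nat \<Rightarrow> real^'p) \<Rightarrow> nat \<Rightarrow> 'p set \<Rightarrow> nat \<Rightarrow> real set" where
  "sparse_ratios x n T m = {(norm2n x n \<delta>)^2 / (norm \<delta>)^2 | \<delta>. \<delta> \<noteq> 0 \<and> l0_out \<delta> T \<le> m}"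

definition kappa_sp :: "(nat \<Rightarrow> real^'p) \<Rightarrow> nat \<Rightarrow> 'p set \<Rightarrow> nat \<Rightarrow> real" where
  "kappa_sp x n T m = sqrt (Inf (sparse_ratios x n T m))"

definition phi_sp :: "(nat \<Rightarrow> real^'p) \<Rightarrow> nat \<Rightarrow> 'p set \<Rightarrow> nat \<Rightarrow> real" where
  "phi_sp x n T m = Sup (sparse_ratios x n T m)"

definition mu_sp :: "(nat \<Rightarrow> real^'p) \<Rightarrow> nat \<Rightarrow> 'p set \<Rightarrow> nat \<Rightarrow> real" where
  "mu_sp x n T m = sqrt (phi_sp x n T m) / kappa_sp x n T m"

end

theory Submission
  imports Defs
begin

lemma norm2n_L2: "norm2n x n d = L2_set (\<lambda>i. x i \<bullet> d) {..<n} / sqrt (real n)"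
  unfolding norm2n_def L2_set_def by (simp add: real_sqrt_divide)

lemma norm2n_nonneg: "norm2n x n d \<ge> 0"
  unfolding norm2n_def by (simp add: sum_nonneg)

lemma norm2n_add: "norm2n x n (a + b) \<le> norm2n x n a + norm2n x n b"
proof -
  have "L2_set (\<lambda>i. x i \<bullet> (a+b)) {..<n} \<le> L2_set (\<lambda>i. x i \<bullet> a) {..<n} + L2_set (\<lambda>i. x i \<bullet> b) {..<n}"
    unfolding inner_add_right by (rule L2_set_triangle_ineq)
  then show ?thesis unfolding norm2n_L2 by (metis add_divide_distrib divide_right_mono real_sqrt_ge_zero of_nat_0_le_iff)
qed

lemma norm2n_minus: "norm2n x n (- a) = norm2n x n a"
  unfolding norm2n_def by simp

lemma norm2n_zero: "norm2n x n 0 = 0"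
  unfolding norm2n_def by simp

lemma norm2n_sq: "(norm2n x n d)^2 = (\<Sum>i<n. (x i \<bullet> d)^2) / real n"
  unfolding norm2n_def by (simp add: sum_nonneg)

lemma ratio_bound:
  "(norm2n x n d)^2 / (norm d)^2 \<le> (\<Sum>i<n. (norm (x i))^2) / real n"
proof (cases "d = 0")
  case True then show ?thesis by (simp add: sum_nonneg)
next
  case False
  have "(\<Sum>i<n. (x i \<bullet> d)^2) \<le> (\<Sum>i<n. (norm (x i))^2 * (norm d)^2)"
  proof (rule sum_mono)
    fix i
    have "\<bar>x i \<bullet> d\<bar> \<le> norm (x i) * norm d" by (rule Cauchy_Schwarz_ineq2)
    hence "\<bar>x i \<bullet> d\<bar>^2 \<le> (norm (x i) * norm d)^2" by (rule power_mono) simp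
    thus "(x i \<bullet> d)^2 \<le> (norm (x i))^2 * (norm d)^2" by (simp add: power_mult_distrib)
  qed
  hence h1: "(\<Sum>i<n. (x i \<bullet> d)^2) \<le> (\<Sum>i<n. (norm (x i))^2) * (norm d)^2"
    by (simp add: sum_distrib_right)
  have pos: "(norm d)^2 > 0" using False by simp
  have h2: "(\<Sum>i<n. (x i \<bullet> d)^2) / (norm d)^2 \<le> (\<Sum>i<n. (norm (x i))^2)"
    using h1 pos by (simp add: divide_le_eq)
  have "(norm2n x n d)^2 / (norm d)^2 = ((\<Sum>i<n. (x i \<bullet> d)^2) / (norm d)^2) / real n"
    unfolding norm2n_sq by simp
  also have "\<dots> \<le> (\<Sum>i<n. (norm (x i))^2) / real n"
    using h2 by (rule divide_right_mono) simp
  finally show ?thesis .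
qed

lemma bdd_ratios: "bdd_above (sparse_ratios x n T m)" "bdd_below (sparse_ratios x n T m)"
  unfolding sparse_ratios_def
  by (auto intro!: bdd_aboveI[where M="(\<Sum>i<n. (norm (x i))^2) / real n"] bdd_belowI[where m=0] ratio_bound)


lemma ratios_ne:
  assumes "m > 0" shows "\<exists>r. r \<in> sparse_ratios x n T m"
proof -
  obtain j :: 'a where True by simp
  let ?d = "axis j (1::real)"
  have sub: "{k. k \<notin> T \<and> ?d $ k \<noteq> 0} \<subseteq> {j}" by (auto simp: axis_def)
  have "l0_out ?d T \<le> card {j}" unfolding l0_out_def by (rule card_mono[OF _ sub]) simp
  hence "l0_out ?d T \<le> m" using assms by simp
  moreover have "?d \<noteq> 0" by (simp add: axis_eq_0_iff)
  ultimately show ?thesis unfolding sparse_ratios_def by blast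
qed

lemma sr_nonneg: "r \<in> sparse_ratios x n T m \<Longrightarrow> r \<ge> 0"
  unfolding sparse_ratios_def by auto

lemma phi_nonneg: "m > 0 \<Longrightarrow> phi_sp x n T m \<ge> 0"
proof -
  assume "m > 0"
  then obtain r where r: "r \<in> sparse_ratios x n T m" using ratios_ne by blast
  have "r \<le> phi_sp x n T m" unfolding phi_sp_def by (rule cSup_upper[OF r bdd_ratios(1)])
  with sr_nonneg[OF r] show ?thesis by simp
qed

lemma kappa_nonneg: "m > 0 \<Longrightarrow> kappa_sp x n T m \<ge> 0"
proof -
  assume "m > 0"
  then have "sparse_ratios x n T m \<noteq> {}" using ratios_ne by blast
  hence "Inf (sparse_ratios x n T m) \<ge> 0" by (rule cInf_greatest) (rule sr_nonneg)
  thus ?thesis unfolding kappa_sp_def by simp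
qed

lemma sqrt_ratio: "d \<noteq> 0 \<Longrightarrow> sqrt ((norm2n x n d)^2 / (norm d)^2) = norm2n x n d / norm d"
  by (simp add: real_sqrt_divide norm2n_nonneg)

lemma sp_upper:
  assumes "l0_out d T \<le> m"
  shows "norm2n x n d \<le> sqrt (phi_sp x n T m) * norm d"
proof (cases "d = 0")
  case True then show ?thesis by (simp add: norm2n_zero)
next
  case False
  have r: "(norm2n x n d)^2 / (norm d)^2 \<in> sparse_ratios x n T m"
    unfolding sparse_ratios_def using False assms by blast
  have "(norm2n x n d)^2 / (norm d)^2 \<le> phi_sp x n T m"
    unfolding phi_sp_def by (rule cSup_upper[OF r bdd_ratios(1)])
  hence "norm2n x n d / norm d \<le> sqrt (phi_sp x n T m)"
    using real_sqrt_le_mono sqrt_ratio[OF False] by metis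
  thus ?thesis using False by (simp add: pos_divide_le_eq)
qed

lemma sp_lower:
  assumes "l0_out d T \<le> m"
  shows "kappa_sp x n T m * norm d \<le> norm2n x n d"
proof (cases "d = 0")
  case True then show ?thesis by (simp add: norm2n_zero)
next
  case False
  have r: "(norm2n x n d)^2 / (norm d)^2 \<in> sparse_ratios x n T m"
    unfolding sparse_ratios_def using False assms by blast
  have "Inf (sparse_ratios x n T m) \<le> (norm2n x n d)^2 / (norm d)^2"
    by (rule cInf_lower[OF r bdd_ratios(2)])
  hence "kappa_sp x n T m \<le> norm2n x n d / norm d"
    unfolding kappa_sp_def using real_sqrt_le_mono sqrt_ratio[OF False] by metis
  thus ?thesis using False by (simp add: pos_le_divide_eq)
qed

lemma norm_sum_sq: "norm (d::real^'p) = sqrt (\<Sum>j\<in>UNIV. (d$j)^2)"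
  by (simp add: norm_vec_def L2_set_def)

lemma norm_le_comp:
  assumes "\<And>j. \<bar>a$j\<bar> \<le> \<bar>b$j\<bar>" shows "norm (a::real^'p) \<le> norm b"
  unfolding norm_vec_def by (rule L2_set_mono) (use assms in auto)

lemma norm_le_sparse:
  fixes d :: "real^'p"
  assumes "card {j. d$j \<noteq> 0} \<le> k" "\<And>j. \<bar>d$j\<bar> \<le> A"
  shows "norm d \<le> sqrt (real k) * A"
proof -
  obtain j0 :: 'p where True by simp
  have A0: "A \<ge> 0" using assms(2)[of j0] by simp
  let ?S = "{j. d$j \<noteq> 0}"
  have "(\<Sum>j\<in>UNIV. (d$j)^2) = (\<Sum>j\<in>?S. (d$j)^2)"
    by (rule sum.mono_neutral_right) auto
  also have "\<dots> \<le> (\<Sum>j\<in>?S. A^2)"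
  proof (rule sum_mono)
    fix j show "(d$j)^2 \<le> A^2" using assms(2)[of j] A0
      by (metis abs_ge_zero power2_abs power_mono)
  qed
  also have "\<dots> = real (card ?S) * A^2" by simp
  also have "\<dots> \<le> real k * A^2" using assms(1) by (simp add: mult_right_mono)
  finally have "norm d \<le> sqrt (real k * A^2)" unfolding norm_sum_sq by (rule real_sqrt_le_mono)
  thus ?thesis using A0 by (simp add: real_sqrt_mult)
qed

lemma choose_block:
  fixes f :: "'a \<Rightarrow> real"
  assumes fin: "finite S" and cS: "card S > m" and f0: "\<And>j. f j \<ge> 0"
  shows "\<exists>B\<subseteq>S. card B = m \<and> (\<forall>k\<in>S - B. real m * f k \<le> sum f B)"
proof -
  let ?F = "{B. B \<subseteq> S \<and> card B = m}"
  have finF: "finite ?F" by (rule finite_subset[of _ "Pow S"]) (use fin in auto)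
  obtain B0 where "B0 \<subseteq> S" "card B0 = m" using obtain_subset_with_card_n[of m S] cS by auto
  hence neF: "?F \<noteq> {}" by blast
  have "Max (sum f ` ?F) \<in> sum f ` ?F" by (rule Max_in) (use finF neF in auto)
  then obtain B where B: "B \<subseteq> S" "card B = m" "sum f B = Max (sum f ` ?F)" by auto
  have finB: "finite B" using B(1) fin finite_subset by blast
  have maxB: "sum f B' \<le> sum f B" if "B' \<subseteq> S" "card B' = m" for B'
  proof -
    have "sum f B' \<in> sum f ` ?F" using that by blast
    from Max_ge[OF finite_imageI[OF finF] this] show ?thesis using B(3) by simp
  qed
  have "real m * f k \<le> sum f B" if k: "k \<in> S - B" for k
  proof -
    have fj: "f k \<le> f j" if j: "j \<in> B" for j
    proof -
      let ?B' = "insert k (B - {j})"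
      have "?B' \<subseteq> S" using B(1) k j by auto
      moreover have "card ?B' = m" using finB j k B(2)
        by (simp add: card_insert_if) (metis One_nat_def Suc_pred card_gt_0_iff empty_iff)
      ultimately have "sum f ?B' \<le> sum f B" by (rule maxB)
      moreover have "sum f ?B' = f k + (sum f B - f j)"
        using finB j k by (simp add: sum_diff1)
      ultimately show ?thesis by simp
    qed
    have "real m * f k = (\<Sum>j\<in>B. f k)" using B(2) by simp
    also have "\<dots> \<le> sum f B" by (rule sum_mono) (rule fj)
    finally show ?thesis .
  qed
  thus ?thesis using B(1,2) by blast
qed

lemma l1_restr: "l1norm (restr d B) = (\<Sum>j\<in>B. \<bar>d$j\<bar>)"
proof -
  have "l1norm (restr d B) = (\<Sum>j\<in>UNIV. if j \<in> B then \<bar>d$j\<bar> else 0)"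
    unfolding l1norm_def restr_def by (rule sum.cong) auto
  also have "\<dots> = (\<Sum>j\<in>UNIV \<inter> B. \<bar>d$j\<bar>)" using sum.inter_restrict[of UNIV "\<lambda>j. \<bar>d$j\<bar>" B] by simp
  finally show ?thesis by simp
qed

lemma l1_split: "l1norm d = l1norm (restr d B) + l1norm (restr d (- B))"
proof -
  have "l1norm d = (\<Sum>j\<in>UNIV - B. \<bar>d$j\<bar>) + (\<Sum>j\<in>B. \<bar>d$j\<bar>)"
    unfolding l1norm_def by (rule sum.subset_diff) auto
  thus ?thesis unfolding l1_restr by (simp add: Compl_eq_Diff_UNIV)
qed

lemma restr_split: "d = restr d B + restr d (- B)"
  by (simp add: vec_eq_iff restr_def)

lemma l1_nonneg: "l1norm d \<ge> 0"
  unfolding l1norm_def by (simp add: sum_nonneg)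

lemma l1_zero: "l1norm d = 0 \<Longrightarrow> d = 0"
  unfolding l1norm_def by (simp add: sum_nonneg_eq_0_iff vec_eq_iff)


lemma l0_le_supp: "l0_out d T \<le> card {j. d$j \<noteq> 0}"
  unfolding l0_out_def by (rule card_mono) auto

lemma sqrt_div: "m > 0 \<Longrightarrow> sqrt (real m) * (L / real m) = L / sqrt (real m)"
proof -
  assume "m > 0"
  hence p: "sqrt (real m) > 0" by simp
  have "real m = sqrt (real m) * sqrt (real m)" by simp
  thus ?thesis using p by (metis divide_divide_eq_right nonzero_mult_div_cancel_left times_divide_eq_right less_irrefl)
qed

lemma block_decomp:
  fixes v :: "real^'p"
  assumes m: "m > 0" and big: "\<not> card {j. v$j \<noteq> 0} \<le> m"
  shows "\<exists>B. B \<subseteq> {j. v$j \<noteq> 0} \<and> card B = m \<and>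
     (\<forall>j. \<bar>restr v (- B) $ j\<bar> \<le> l1norm (restr v B) / real m)"
proof -
  let ?S = "{j. v$j \<noteq> 0}"
  obtain B where B: "B \<subseteq> ?S" "card B = m" "\<forall>k\<in>?S - B. real m * \<bar>v$k\<bar> \<le> (\<Sum>j\<in>B. \<bar>v$j\<bar>)"
    using choose_block[of ?S m "\<lambda>j. \<bar>v$j\<bar>"] big by auto
  have A0: "l1norm (restr v B) / real m \<ge> 0" using l1_nonneg[of "restr v B"] by simp
  have "\<bar>restr v (- B) $ j\<bar> \<le> l1norm (restr v B) / real m" for j
  proof (cases "j \<in> B \<or> v$j = 0")
    case True then show ?thesis using A0 by (auto simp: restr_def)
  next
    case False
    hence "j \<in> ?S - B" by auto
    with B(3) have "real m * \<bar>v$j\<bar> \<le> l1norm (restr v B)" unfolding l1_restr by blast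
    thus ?thesis using False m by (simp add: restr_def pos_le_divide_eq mult.commute)
  qed
  thus ?thesis using B(1,2) by blast
qed

lemma tail_bound:
  fixes x :: "nat \<Rightarrow> real^'p" and T :: "'p set" and w :: "real^'p"
  assumes m: "m > 0" and bnd: "\<forall>j. \<bar>w$j\<bar> \<le> A"
  shows "norm2n x n w \<le> sqrt (phi_sp x n T m) * (sqrt (real m) * A + l1norm w / sqrt (real m))"
proof -
  let ?P = "sqrt (phi_sp x n T m)"
  have P0: "?P \<ge> 0" using phi_nonneg[OF m] by simp
  have "\<forall>w A. card {j. w$j \<noteq> 0} = N \<longrightarrow> (\<forall>j. \<bar>w$j\<bar> \<le> A) \<longrightarrow>
     norm2n x n w \<le> ?P * (sqrt (real m) * A + l1norm w / sqrt (real m))" for N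
  proof (induction N rule: less_induct)
    case (less N)
    show ?case
    proof (intro allI impI)
      fix w :: "real^'p" and A
      assume N: "card {j. w$j \<noteq> 0} = N" and bw: "\<forall>j. \<bar>w$j\<bar> \<le> A"
      show "norm2n x n w \<le> ?P * (sqrt (real m) * A + l1norm w / sqrt (real m))"
      proof (cases "card {j. w$j \<noteq> 0} \<le> m")
        case True
        have "norm2n x n w \<le> ?P * norm w"
          by (rule sp_upper) (use l0_le_supp[of w T] True in linarith)
        also have "\<dots> \<le> ?P * (sqrt (real m) * A)"
          by (rule mult_left_mono[OF norm_le_sparse[OF True] P0]) (use bw in blast)
        also have "\<dots> \<le> ?P * (sqrt (real m) * A + l1norm w / sqrt (real m))"
          using l1_nonneg[of w] P0 by (simp add: mult_left_mono)
        finally show ?thesis .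
      next
        case False
        let ?S = "{j. w$j \<noteq> 0}"
        obtain B where B: "B \<subseteq> ?S" "card B = m"
          "\<forall>j. \<bar>restr w (- B) $ j\<bar> \<le> l1norm (restr w B) / real m"
          using block_decomp[OF m False] by blast
        define wB where "wB = restr w B"
        define w' where "w' = restr w (- B)"
        have split: "w = wB + w'" using restr_split unfolding wB_def w'_def by blast
        have supp': "{j. w'$j \<noteq> 0} = ?S - B" by (auto simp: w'_def restr_def)
        have Bne: "B \<noteq> {}" using B(2) m by auto
        have "?S - B \<subset> ?S" using B(1) Bne by blast
        hence lt: "card {j. w'$j \<noteq> 0} < N" unfolding supp' N[symmetric]
          by (rule psubset_card_mono[rotated]) simp
        have IH: "norm2n x n w' \<le> ?P * (sqrt (real m) * (l1norm wB / real m) + l1norm w' / sqrt (real m))"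
          using less.IH[OF lt] B(3) unfolding wB_def w'_def by blast
        have cB: "card {j. wB$j \<noteq> 0} \<le> m"
          proof -
          have "{j. wB$j \<noteq> 0} \<subseteq> B" by (auto simp: wB_def restr_def)
          thus ?thesis using B(2) by (metis card_mono finite)
        qed
        have "norm2n x n wB \<le> ?P * norm wB"
          by (rule sp_upper) (use l0_le_supp[of wB T] cB in linarith)
        also have "\<dots> \<le> ?P * (sqrt (real m) * A)"
          by (rule mult_left_mono[OF norm_le_sparse[OF cB] P0]) (use bw in \<open>auto simp: wB_def restr_def\<close>)
        finally have hB: "norm2n x n wB \<le> ?P * (sqrt (real m) * A)" .
        have l1: "l1norm w = l1norm wB + l1norm w'" unfolding wB_def w'_def by (rule l1_split)
        have "norm2n x n w \<le> norm2n x n wB + norm2n x n w'" using norm2n_add split by metis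
        also have "\<dots> \<le> ?P * (sqrt (real m) * A) + ?P * (l1norm wB / sqrt (real m) + l1norm w' / sqrt (real m))"
          using hB IH sqrt_div[OF m, of "l1norm wB"] by simp
        also have "\<dots> = ?P * (sqrt (real m) * A + l1norm w / sqrt (real m))"
          unfolding l1 by (simp add: add_divide_distrib algebra_simps)
        finally show ?thesis .
      qed
    qed
  qed
  thus ?thesis using bnd by blast
qed


lemma main_bound:
  fixes x :: "nat \<Rightarrow> real^'p" and T :: "'p set" and u v :: "real^'p"
  assumes m: "m > 0" and hu: "\<forall>j. j \<notin> T \<longrightarrow> u$j = 0" and hv: "\<forall>j\<in>T. v$j = 0"
  shows "kappa_sp x n T m * norm u - sqrt (phi_sp x n T m) * l1norm v / sqrt (real m) \<le> norm2n x n (u + v)"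
proof -
  let ?K = "kappa_sp x n T m" and ?P = "sqrt (phi_sp x n T m)"
  have K0: "?K \<ge> 0" using kappa_nonneg[OF m] .
  have P0: "?P \<ge> 0" using phi_nonneg[OF m] by simp
  have Q0: "?P * l1norm v / sqrt (real m) \<ge> 0" using P0 l1_nonneg[of v] by simp
  show ?thesis
  proof (cases "card {j. v$j \<noteq> 0} \<le> m")
    case True
    have "{j. j \<notin> T \<and> (u+v)$j \<noteq> 0} \<subseteq> {j. v$j \<noteq> 0}" using hu by auto
    hence "l0_out (u+v) T \<le> m" unfolding l0_out_def using True by (metis card_mono finite order_trans)
    hence h1: "?K * norm (u+v) \<le> norm2n x n (u+v)" by (rule sp_lower)
    have "norm u \<le> norm (u+v)"
    proof (rule norm_le_comp)
      fix j show "\<bar>u$j\<bar> \<le> \<bar>(u+v)$j\<bar>" by (cases "j \<in> T") (auto simp: hu hv)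
    qed
    hence "?K * norm u \<le> ?K * norm (u+v)" using K0 by (rule mult_left_mono)
    thus ?thesis using h1 Q0 by linarith
  next
    case False
    obtain B where B: "B \<subseteq> {j. v$j \<noteq> 0}" "card B = m"
      "\<forall>j. \<bar>restr v (- B) $ j\<bar> \<le> l1norm (restr v B) / real m"
      using block_decomp[OF m False] by blast
    define vB where "vB = restr v B"
    define w where "w = restr v (- B)"
    have "{j. j \<notin> T \<and> (u+vB)$j \<noteq> 0} \<subseteq> B" using hu by (auto simp: vB_def restr_def)
    hence "l0_out (u+vB) T \<le> m" unfolding l0_out_def using B(2) by (metis card_mono finite)
    hence h1: "?K * norm (u+vB) \<le> norm2n x n (u+vB)" by (rule sp_lower)
    have "norm u \<le> norm (u+vB)"
    proof (rule norm_le_comp)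
      fix j show "\<bar>u$j\<bar> \<le> \<bar>(u+vB)$j\<bar>" by (cases "j \<in> T") (auto simp: hu hv vB_def restr_def)
    qed
    hence h2: "?K * norm u \<le> ?K * norm (u+vB)" using K0 by (rule mult_left_mono)
    have eq: "u + vB = (u + v) + (- w)" by (simp add: vec_eq_iff vB_def w_def restr_def)
    have h3: "norm2n x n (u+vB) \<le> norm2n x n (u+v) + norm2n x n w"
      using norm2n_add[of x n "u+v" "-w"] unfolding eq norm2n_minus .
    have "norm2n x n w \<le> ?P * (sqrt (real m) * (l1norm vB / real m) + l1norm w / sqrt (real m))"
      by (rule tail_bound[OF m]) (use B(3) in \<open>simp add: w_def vB_def\<close>)
    also have "\<dots> = ?P * l1norm v / sqrt (real m)"
      unfolding sqrt_div[OF m] l1_split[of v B] vB_def w_def by (simp add: add_divide_distrib algebra_simps)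
    finally show ?thesis using h1 h2 h3 by linarith
  qed
qed

lemma l1_le_sqrt_card:
  fixes u :: "real^'p"
  assumes hu: "\<forall>j. j \<notin> T \<longrightarrow> u$j = 0" and cT: "card T = s"
  shows "l1norm u \<le> sqrt (real s) * norm u"
proof -
  define e :: "real^'p" where "e = (\<chi> j. if j \<in> T then sgn (u$j) else 0)"
  have "l1norm u = (\<Sum>j\<in>UNIV. u$j * e$j)"
    unfolding l1norm_def
  proof (rule sum.cong)
    fix j show "\<bar>u$j\<bar> = u$j * e$j"
      by (cases "j \<in> T") (auto simp: e_def hu sgn_if abs_if)
  qed simp
  also have "\<dots> = u \<bullet> e" by (simp add: inner_vec_def)
  also have "\<dots> \<le> norm u * norm e" using Cauchy_Schwarz_ineq2[of u e] by simp
  also have "norm e \<le> sqrt (real s) * 1"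
  proof (rule norm_le_sparse)
    have "{j. e$j \<noteq> 0} \<subseteq> T" by (auto simp: e_def)
    thus "card {j. e$j \<noteq> 0} \<le> s" using cT by (metis card_mono finite)
    fix j show "\<bar>e$j\<bar> \<le> 1" by (auto simp: e_def sgn_if)
  qed
  hence "norm u * norm e \<le> norm u * (sqrt (real s) * 1)" by (simp add: mult_left_mono)
  finally show ?thesis by (simp add: mult.commute)
qed


lemma alg_e2: "((K::real) - P * b * (a / d)) * L = K * L - a * (P * (b * L) / d)"
  by (simp add: algebra_simps)

theorem lemma10:
  fixes x :: "nat \<Rightarrow> real^'p" and n :: nat and T :: "'p set" and s :: nat
    and c :: real and m :: nat
  assumes "n \<ge> 1"
    and "card T = s" and "s \<ge> 1"
    and "c > 1"
    and "m > 0"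
  shows "kappa_re x n T s ((c + 1) / (c - 1)) \<ge>
    kappa_sp x n T m * (1 - mu_sp x n T m * ((c + 1) / (c - 1)) * sqrt (real s / real m))"
proof -
  let ?cb = "(c + 1) / (c - 1)"
  let ?K = "kappa_sp x n T m" and ?P = "sqrt (phi_sp x n T m)"
  let ?R = "{sqrt (real s) * norm2n x n \<delta> / l1norm (restr \<delta> T) | \<delta>.
      l1norm (restr \<delta> (- T)) \<le> ?cb * l1norm (restr \<delta> T) \<and> restr \<delta> T \<noteq> 0}"
  have m: "m > 0" by fact
  have cb0: "?cb > 0" using assms(4) by simp
  have K0: "?K \<ge> 0" using kappa_nonneg[OF m] .
  have P0: "?P \<ge> 0" using phi_nonneg[OF m] by simp
  have "T \<noteq> {}" using assms(2,3) by auto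
  then obtain j0 where j0: "j0 \<in> T" by blast
  let ?d = "axis j0 (1::real)"
  have d1: "restr ?d T = ?d" using j0 by (auto simp: vec_eq_iff restr_def axis_def)
  have d2: "restr ?d (- T) = 0" using j0 by (auto simp: vec_eq_iff restr_def axis_def)
  have "l1norm (0::real^'p) = 0" by (simp add: l1norm_def)
  hence c1: "l1norm (restr ?d (- T)) \<le> ?cb * l1norm (restr ?d T)"
  proof -
    have "0 \<le> ?cb * l1norm ?d" using l1_nonneg[of ?d] cb0 by (intro mult_nonneg_nonneg) auto
    thus ?thesis using d1 d2 \<open>l1norm (0::real^'p) = 0\<close> by simp
  qed
  have c2: "restr ?d T \<noteq> 0" using d1 by (simp add: axis_eq_0_iff)
  have "sqrt (real s) * norm2n x n ?d / l1norm (restr ?d T) \<in> ?R"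
    using c1 c2 by blast
  hence ne: "?R \<noteq> {}" by blast
  show ?thesis unfolding kappa_re_def
  proof (rule cInf_greatest[OF ne])
    fix r assume "r \<in> ?R"
    then obtain \<delta> where r: "r = sqrt (real s) * norm2n x n \<delta> / l1norm (restr \<delta> T)"
      and c1: "l1norm (restr \<delta> (- T)) \<le> ?cb * l1norm (restr \<delta> T)" and c2: "restr \<delta> T \<noteq> 0" by blast
    define u where "u = restr \<delta> T"
    define v where "v = restr \<delta> (- T)"
    define L where "L = l1norm u"
    define N where "N = norm2n x n \<delta>"
    have Lpos: "L > 0" using c2 l1_nonneg[of u] l1_zero[of u] unfolding L_def u_def by force
    have r0: "r \<ge> 0" unfolding r using norm2n_nonneg[of x n \<delta>] Lpos L_def u_def by simp
    have hu: "\<forall>j. j \<notin> T \<longrightarrow> u$j = 0" by (simp add: u_def restr_def)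
    have hv: "\<forall>j\<in>T. v$j = 0" by (simp add: v_def restr_def)
    have duv: "\<delta> = u + v" unfolding u_def v_def by (rule restr_split)
    have mb: "?K * norm u - ?P * l1norm v / sqrt (real m) \<le> N"
      using main_bound[OF m hu hv, of x n] duv N_def by simp
    have lu: "L \<le> sqrt (real s) * norm u" unfolding L_def by (rule l1_le_sqrt_card[OF hu assms(2)])
    show "?K * (1 - mu_sp x n T m * ?cb * sqrt (real s / real m)) \<le> r"
    proof (cases "?K = 0")
      case True then show ?thesis using r0 by simp
    next
      case False
      hence Kp: "?K > 0" using K0 by simp
      have rhs: "?K * (1 - mu_sp x n T m * ?cb * sqrt (real s / real m)) = ?K - ?P * ?cb * (sqrt (real s) / sqrt (real m))"
      proof -
        have kk: "?K * (?P / ?K) = ?P" using Kp by simp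
        have "?K * (1 - mu_sp x n T m * ?cb * sqrt (real s / real m)) = ?K - (?K * (?P / ?K)) * ?cb * (sqrt (real s) / sqrt (real m))"
          unfolding mu_sp_def real_sqrt_divide by (simp only: right_diff_distrib mult_1_right mult.assoc)
        thus ?thesis unfolding kk .
      qed
      have h1: "?K * L \<le> ?K * (sqrt (real s) * norm u)" using lu K0 by (rule mult_left_mono)
      have "?P * l1norm v \<le> ?P * (?cb * L)" using c1 P0 unfolding v_def L_def u_def by (rule mult_left_mono)
      hence "?P * l1norm v / sqrt (real m) \<le> ?P * (?cb * L) / sqrt (real m)" by (rule divide_right_mono) simp
      hence h2: "sqrt (real s) * (?P * l1norm v / sqrt (real m)) \<le> sqrt (real s) * (?P * (?cb * L) / sqrt (real m))"
        by (rule mult_left_mono) simp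
      have h3: "sqrt (real s) * (?K * norm u - ?P * l1norm v / sqrt (real m)) \<le> sqrt (real s) * N"
        using mb by (rule mult_left_mono) simp
      have e1: "sqrt (real s) * (?K * norm u - ?P * l1norm v / sqrt (real m)) = ?K * (sqrt (real s) * norm u) - sqrt (real s) * (?P * l1norm v / sqrt (real m))"
        by (simp add: algebra_simps)
      have e2: "(?K - ?P * ?cb * (sqrt (real s) / sqrt (real m))) * L = ?K * L - sqrt (real s) * (?P * (?cb * L) / sqrt (real m))"
        by (rule alg_e2)
      have "(?K - ?P * ?cb * (sqrt (real s) / sqrt (real m))) * L \<le> sqrt (real s) * N"
        using h1 h2 h3 e1 e2 by linarith
      hence "?K - ?P * ?cb * (sqrt (real s) / sqrt (real m)) \<le> sqrt (real s) * N / L"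
        using Lpos by (simp add: pos_le_divide_eq)
      thus ?thesis unfolding rhs r N_def L_def u_def .
    qed
  qed
qed

end
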